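(* For a prime $p$ let $S_p$ be the set of words $w\in\{B,R\}^p$ such that for no $r\in\{1,\dots,p-1\}$ and $i\in\{0,\dots,p-1\}$ are $w_i,w_{i+r},w_{i+2r},w_{i+3r}$ (indices mod $p$) all equal. Then $|S_5|=20$, $S_5$ splits into 4 orbits under $D_5$ and 2 orbits under $D_5\times\langle\tau\rangle$; and $|S_{11}|=44$, $S_{11}$ splits into 2 orbits under $D_{11}$ and 1 orbit under $D_{11}\times\langle\tau\rangle$. In particular $\texttt{BBBRR}\in S_5$ and $\texttt{BBBRBBRBRRR}\in S_{11}$.
   Context: The dihedral group $D_p$ acts on $\{B,R\}^p$ (indices mod $p$) via rotations $(\rho_k w)_i=w_{i-k}$ and reflections $(\sigma_k w)_i=w_{k-i}$. The global color swap $\tau$ interchanges $B\leftrightarrow R$ in every position. *)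

theory Defs
  imports Main
begin

datatype color = B | R

definition words :: "nat \<Rightarrow> color list set" where
  "words p = {w. length w = p}"

definition S :: "nat \<Rightarrow> color list set" where
  "S p = {w \<in> words p. \<not> (\<exists>r\<in>{1..p-1}. \<exists>i<p.
      w ! ((i + r) mod p) = w ! i \<and> w ! ((i + 2*r) mod p) = w ! i \<and>
      w ! ((i + 3*r) mod p) = w ! i)}"

text \<open>Rotation: (rho_k w)_i = w_{i-k}; reflection: (sigma_k w)_i = w_{k-i}, indices mod p.\<close>
definition rho :: "nat \<Rightarrow> nat \<Rightarrow> color list \<Rightarrow> color list" where
  "rho p k w = map (\<lambda>i. w ! ((i + p - k mod p) mod p)) [0..<p]"

definition sigma :: "nat \<Rightarrow> nat \<Rightarrow> color list \<Rightarrow> color list" where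
  "sigma p k w = map (\<lambda>i. w ! ((k mod p + p - i) mod p)) [0..<p]"

definition swap :: "color \<Rightarrow> color" where
  "swap c = (case c of B \<Rightarrow> R | R \<Rightarrow> B)"

definition tau :: "color list \<Rightarrow> color list" where
  "tau w = map swap w"

definition Dih :: "nat \<Rightarrow> (color list \<Rightarrow> color list) set" where
  "Dih p = {rho p k | k. k < p} \<union> {sigma p k | k. k < p}"

definition DihTau :: "nat \<Rightarrow> (color list \<Rightarrow> color list) set" where
  "DihTau p = Dih p \<union> {tau \<circ> g | g. g \<in> Dih p}"

definition orbit :: "('a \<Rightarrow> 'a) set \<Rightarrow> 'a \<Rightarrow> 'a set" where
  "orbit G x = {g x | g. g \<in> G}"

definition orbits :: "('a \<Rightarrow> 'a) set \<Rightarrow> 'a set \<Rightarrow> 'a set set" where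
  "orbits G X = orbit G ` X"

end

theory Submission
  imports Defs
begin

fun allw :: "nat \<Rightarrow> color list list" where
  "allw 0 = [[]]"
| "allw (Suc n) = concat (map (\<lambda>w. [B#w, R#w]) (allw n))"

lemma allw_set: "set (allw n) = {w. length w = n}"
proof (induction n)
  case 0 then show ?case by auto
next
  case (Suc n)
  show ?case
  proof (intro set_eqI iffI)
    fix w :: "color list" assume "w \<in> set (allw (Suc n))" then show "w \<in> {w. length w = Suc n}"
      using Suc by auto
  next
    fix w :: "color list" assume "w \<in> {w. length w = Suc n}"
    then obtain c v where w: "w = c # v" "length v = n" by (cases w) auto
    then show "w \<in> set (allw (Suc n))" using Suc by (cases c) auto
  qed
qed

definition okp :: "nat \<Rightarrow> color list \<Rightarrow> bool" where
  "okp p w = (\<not> (\<exists>r\<in>set [1..<p]. \<exists>i\<in>set [0..<p].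
      w ! ((i + r) mod p) = w ! i \<and> w ! ((i + 2*r) mod p) = w ! i \<and>
      w ! ((i + 3*r) mod p) = w ! i))"

lemma S_eq: "S p = set (filter (okp p) (allw p))"
  unfolding S_def okp_def words_def by (auto simp: allw_set)

definition orbL :: "nat \<Rightarrow> color list \<Rightarrow> color list list" where
  "orbL p w = map (\<lambda>k. rho p k w) [0..<p] @ map (\<lambda>k. sigma p k w) [0..<p]"

lemma orbit_Dih: "orbit (Dih p) w = set (orbL p w)"
  unfolding orbit_def Dih_def orbL_def by auto blast+

lemma orbit_DihTau0: "orbit (DihTau p) w = orbit (Dih p) w \<union> tau ` orbit (Dih p) w"
  unfolding orbit_def DihTau_def by auto (metis comp_apply)+

lemma orbit_DihTau: "orbit (DihTau p) w = set (orbL p w @ map tau (orbL p w))"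
  unfolding orbit_DihTau0 orbit_Dih by simp

lemma orbits_set: "orbits G (set xs) = set (map (orbit G) xs)"
  unfolding orbits_def by simp

lemma card_set: "card (set xs) = length (remdups xs)"
  by (simp add: length_remdups_card_conv)

lemma ifF: "(if c then False else X) = (\<not> c \<and> X)" by simp
lemma conj_True: "(P \<and> True) = P" by simp

lemma okp5_disj: "okp 5 [a0, a1, a2, a3, a4] = (\<not> ((a1 = a0 \<and> a2 = a0 \<and> a3 = a0) \<or> (a2 = a1 \<and> a3 = a1 \<and> a4 = a1) \<or> (a3 = a2 \<and> a4 = a2 \<and> a0 = a2) \<or> (a4 = a3 \<and> a0 = a3 \<and> a1 = a3) \<or> (a0 = a4 \<and> a1 = a4 \<and> a2 = a4) \<or> (a2 = a0 \<and> a4 = a0 \<and> a1 = a0) \<or> (a3 = a1 \<and> a0 = a1 \<and> a2 = a1) \<or> (a4 = a2 \<and> a1 = a2 \<and> a3 = a2) \<or> (a0 = a3 \<and> a2 = a3 \<and> a4 = a3) \<or> (a1 = a4 \<and> a3 = a4 \<and> a0 = a4) \<or> (a3 = a0 \<and> a1 = a0 \<and> a4 = a0) \<or> (a4 = a1 \<and> a2 = a1 \<and> a0 = a1) \<or> (a0 = a2 \<and> a3 = a2 \<and> a1 = a2) \<or> (a1 = a3 \<and> a4 = a3 \<and> a2 = a3) \<or> (a2 = a4 \<and> a0 = a4 \<and> a3 = a4) \<or> (a4 = a0 \<and> a3 = a0 \<and> a2 = a0) \<or> (a0 = a1 \<and> a4 = a1 \<and> a3 = a1) \<or> (a1 = a2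 \<and> a0 = a2 \<and> a4 = a2) \<or> (a2 = a3 \<and> a1 = a3 \<and> a0 = a3) \<or> (a3 = a4 \<and> a2 = a4 \<and> a1 = a4)))"
  by (simp add: okp_def upt_rec)

lemma okp5: "okp 5 [a0, a1, a2, a3, a4] = (if (a1 = a0 \<and> a2 = a0 \<and> a3 = a0) then False else if (a2 = a1 \<and> a3 = a1 \<and> a4 = a1) then False else if (a3 = a2 \<and> a4 = a2 \<and> a0 = a2) then False else if (a4 = a3 \<and> a0 = a3 \<and> a1 = a3) then False else if (a0 = a4 \<and> a1 = a4 \<and> a2 = a4) then False else if (a2 = a0 \<and> a4 = a0 \<and> a1 = a0) then False else if (a3 = a1 \<and> a0 = a1 \<and> a2 = a1) then False else if (a4 = a2 \<and> a1 = a2 \<and> a3 = a2) then False else if (a0 = a3 \<and> a2 = a3 \<and> a4 = a3) then False else if (a1 = a4 \<and> a3 = a4 \<and> a0 = a4) then False else if (a3 = a0 \<and> a1 = a0 \<and> a4 = a0) then False else if (a4 = a1 \<and> a2 = a1 \<and> a0 = a1) then False else if (a0 = a2 \<and> a3 = a2 \<and> a1 = a2) then False else if (a1 = a3 \<and> a4 = a3 \<and> a2 = a3) then False else if (a2 = a4 \<and> a0 = a4 \<and> a3 = a4) then False else if (a4 = a0 \<and> a3 = a0 \<and> a2 = a0) then False else if (a0 = a1 \<and> a4 = a1 \<and> a3 = a1) then False else if (a1 = a2 \<and> a0 = a2 \<and> a4 = a2) then False else if (a2 = a3 \<and> a1 = a3 \<and> a0 = a3) then False else if (a3 = a4 \<and>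 a2 = a4 \<and> a1 = a4) then False else True)"
  unfolding okp5_disj by (simp only: ifF de_Morgan_disj conj_True)

lemma okp11_disj: "okp 11 [a0, a1, a2, a3, a4, a5, a6, a7, a8, a9, a10] = (\<not> ((a1 = a0 \<and> a2 = a0 \<and> a3 = a0) \<or> (a2 = a1 \<and> a3 = a1 \<and> a4 = a1) \<or> (a3 = a2 \<and> a4 = a2 \<and> a5 = a2) \<or> (a4 = a3 \<and> a5 = a3 \<and> a6 = a3) \<or> (a5 = a4 \<and> a6 = a4 \<and> a7 = a4) \<or> (a6 = a5 \<and> a7 = a5 \<and> a8 = a5) \<or> (a7 = a6 \<and> a8 = a6 \<and> a9 = a6) \<or> (a8 = a7 \<and> a9 = a7 \<and> a10 = a7) \<or> (a9 = a8 \<and> a10 = a8 \<and> a0 = a8) \<or> (a10 = a9 \<and> a0 = a9 \<and> a1 = a9) \<or> (a0 = a10 \<and> a1 = a10 \<and> a2 = a10) \<or> (a2 = a0 \<and> a4 = a0 \<and> a6 = a0) \<or> (a3 = a1 \<and> a5 = a1 \<and> a7 = a1) \<or> (a4 = a2 \<and> a6 = a2 \<and> a8 = a2) \<or> (a5 = a3 \<and> a7 = a3 \<and> a9 = a3) \<or> (a6 = a4 \<and> a8 = a4 \<and> a10 = a4) \<or> (a7 = a5 \<and> a9 = a5 \<and> a0 = a5) \<or> (a8 = a6 \<and> a10 = a6 \<and> a1 = a6) \<or> (a9 = a7 \<and> a0 = a7 \<and> a2 = a7) \<or> (a10 = a8 \<and> a1 = a8 \<and> a3 = a8) \<or> (a0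 = a9 \<and> a2 = a9 \<and> a4 = a9) \<or> (a1 = a10 \<and> a3 = a10 \<and> a5 = a10) \<or> (a3 = a0 \<and> a6 = a0 \<and> a9 = a0) \<or> (a4 = a1 \<and> a7 = a1 \<and> a10 = a1) \<or> (a5 = a2 \<and> a8 = a2 \<and> a0 = a2) \<or> (a6 = a3 \<and> a9 = a3 \<and> a1 = a3) \<or> (a7 = a4 \<and> a10 = a4 \<and> a2 = a4) \<or> (a8 = a5 \<and> a0 = a5 \<and> a3 = a5) \<or> (a9 = a6 \<and> a1 = a6 \<and> a4 = a6) \<or> (a10 = a7 \<and> a2 = a7 \<and> a5 = a7) \<or> (a0 = a8 \<and> a3 = a8 \<and> a6 = a8) \<or> (a1 = a9 \<and> a4 = a9 \<and> a7 = a9) \<or> (a2 = a10 \<and> a5 = a10 \<and> a8 = a10) \<or> (a4 = a0 \<and> a8 = a0 \<and> a1 = a0) \<or> (a5 = a1 \<and> a9 = a1 \<and> a2 = a1) \<or> (a6 = a2 \<and> a10 = a2 \<and> a3 = a2) \<or> (a7 = a3 \<and> a0 = a3 \<and> a4 = a3) \<or> (a8 = a4 \<and> a1 = a4 \<and> a5 = a4) \<or> (a9 = a5 \<and> a2 = a5 \<and> a6 = a5) \<or> (a10 = a6 \<and> a3 = a6 \<and> a7 = a6) \<or> (a0 = a7 \<and> a4 = a7 \<and> a8 = a7) \<or> (a1 = a8 \<and> a5 = a8 \<and> a9 = a8) \<or> (a2 = a9 \<and> a6 = a9 \<and> a10 = a9) \<or> (a3 = a10 \<and> a7 = a10 \<and>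 a0 = a10) \<or> (a5 = a0 \<and> a10 = a0 \<and> a4 = a0) \<or> (a6 = a1 \<and> a0 = a1 \<and> a5 = a1) \<or> (a7 = a2 \<and> a1 = a2 \<and> a6 = a2) \<or> (a8 = a3 \<and> a2 = a3 \<and> a7 = a3) \<or> (a9 = a4 \<and> a3 = a4 \<and> a8 = a4) \<or> (a10 = a5 \<and> a4 = a5 \<and> a9 = a5) \<or> (a0 = a6 \<and> a5 = a6 \<and> a10 = a6) \<or> (a1 = a7 \<and> a6 = a7 \<and> a0 = a7) \<or> (a2 = a8 \<and> a7 = a8 \<and> a1 = a8) \<or> (a3 = a9 \<and> a8 = a9 \<and> a2 = a9) \<or> (a4 = a10 \<and> a9 = a10 \<and> a3 = a10) \<or> (a6 = a0 \<and> a1 = a0 \<and> a7 = a0) \<or> (a7 = a1 \<and> a2 = a1 \<and> a8 = a1) \<or> (a8 = a2 \<and> a3 = a2 \<and> a9 = a2) \<or> (a9 = a3 \<and> a4 = a3 \<and> a10 = a3) \<or> (a10 = a4 \<and> a5 = a4 \<and> a0 = a4) \<or> (a0 = a5 \<and> a6 = a5 \<and> a1 = a5) \<or> (a1 = a6 \<and> a7 = a6 \<and> a2 = a6) \<or> (a2 = a7 \<and> a8 = a7 \<and> a3 = a7) \<or> (a3 = a8 \<and> a9 = a8 \<and> a4 = a8) \<or> (a4 = a9 \<and> a10 = a9 \<and> a5 = a9) \<or> (a5 = a10 \<and> a0 = a10 \<and> a6 = a10) \<or> (a7 = a0 \<and> a3 = a0 \<and> a10 = a0) \<or> (a8 = a1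 \<and> a4 = a1 \<and> a0 = a1) \<or> (a9 = a2 \<and> a5 = a2 \<and> a1 = a2) \<or> (a10 = a3 \<and> a6 = a3 \<and> a2 = a3) \<or> (a0 = a4 \<and> a7 = a4 \<and> a3 = a4) \<or> (a1 = a5 \<and> a8 = a5 \<and> a4 = a5) \<or> (a2 = a6 \<and> a9 = a6 \<and> a5 = a6) \<or> (a3 = a7 \<and> a10 = a7 \<and> a6 = a7) \<or> (a4 = a8 \<and> a0 = a8 \<and> a7 = a8) \<or> (a5 = a9 \<and> a1 = a9 \<and> a8 = a9) \<or> (a6 = a10 \<and> a2 = a10 \<and> a9 = a10) \<or> (a8 = a0 \<and> a5 = a0 \<and> a2 = a0) \<or> (a9 = a1 \<and> a6 = a1 \<and> a3 = a1) \<or> (a10 = a2 \<and> a7 = a2 \<and> a4 = a2) \<or> (a0 = a3 \<and> a8 = a3 \<and> a5 = a3) \<or> (a1 = a4 \<and> a9 = a4 \<and> a6 = a4) \<or> (a2 = a5 \<and> a10 = a5 \<and> a7 = a5) \<or> (a3 = a6 \<and> a0 = a6 \<and> a8 = a6) \<or> (a4 = a7 \<and> a1 = a7 \<and> a9 = a7) \<or> (a5 = a8 \<and> a2 = a8 \<and> a10 = a8) \<or> (a6 = a9 \<and> a3 = a9 \<and> a0 = a9) \<or> (a7 = a10 \<and> a4 = a10 \<and> a1 = a10) \<or> (a9 = a0 \<and> a7 = a0 \<and> a5 = a0) \<or> (a10 = a1 \<and> a8 = a1 \<and> a6 = a1) \<or> (a0 = a2 \<and> a9 = a2 \<and> a7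 = a2) \<or> (a1 = a3 \<and> a10 = a3 \<and> a8 = a3) \<or> (a2 = a4 \<and> a0 = a4 \<and> a9 = a4) \<or> (a3 = a5 \<and> a1 = a5 \<and> a10 = a5) \<or> (a4 = a6 \<and> a2 = a6 \<and> a0 = a6) \<or> (a5 = a7 \<and> a3 = a7 \<and> a1 = a7) \<or> (a6 = a8 \<and> a4 = a8 \<and> a2 = a8) \<or> (a7 = a9 \<and> a5 = a9 \<and> a3 = a9) \<or> (a8 = a10 \<and> a6 = a10 \<and> a4 = a10) \<or> (a10 = a0 \<and> a9 = a0 \<and> a8 = a0) \<or> (a0 = a1 \<and> a10 = a1 \<and> a9 = a1) \<or> (a1 = a2 \<and> a0 = a2 \<and> a10 = a2) \<or> (a2 = a3 \<and> a1 = a3 \<and> a0 = a3) \<or> (a3 = a4 \<and> a2 = a4 \<and> a1 = a4) \<or> (a4 = a5 \<and> a3 = a5 \<and> a2 = a5) \<or> (a5 = a6 \<and> a4 = a6 \<and> a3 = a6) \<or> (a6 = a7 \<and> a5 = a7 \<and> a4 = a7) \<or> (a7 = a8 \<and> a6 = a8 \<and> a5 = a8) \<or> (a8 = a9 \<and> a7 = a9 \<and> a6 = a9) \<or> (a9 = a10 \<and> a8 = a10 \<and> a7 = a10)))"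
  by (simp add: okp_def upt_rec)

lemma okp11: "okp 11 [a0, a1, a2, a3, a4, a5, a6, a7, a8, a9, a10] = (if (a1 = a0 \<and> a2 = a0 \<and> a3 = a0) then False else if (a2 = a1 \<and> a3 = a1 \<and> a4 = a1) then False else if (a3 = a2 \<and> a4 = a2 \<and> a5 = a2) then False else if (a4 = a3 \<and> a5 = a3 \<and> a6 = a3) then False else if (a5 = a4 \<and> a6 = a4 \<and> a7 = a4) then False else if (a6 = a5 \<and> a7 = a5 \<and> a8 = a5) then False else if (a7 = a6 \<and> a8 = a6 \<and> a9 = a6) then False else if (a8 = a7 \<and> a9 = a7 \<and> a10 = a7) then False else if (a9 = a8 \<and> a10 = a8 \<and> a0 = a8) then False else if (a10 = a9 \<and> a0 = a9 \<and> a1 = a9) then False else if (a0 = a10 \<and> a1 = a10 \<and> a2 = a10) then False else if (a2 = a0 \<and> a4 = a0 \<and> a6 = a0) then False else if (a3 = a1 \<and> a5 = a1 \<and> a7 = a1) then False else if (a4 = a2 \<and> a6 = a2 \<and> a8 = a2) then False else if (a5 = a3 \<and> a7 = a3 \<and> a9 = a3) then False else if (a6 = a4 \<and> a8 = a4 \<and> a10 = a4) then False else if (a7 = a5 \<and> a9 = a5 \<and> a0 = a5) then False else if (a8 = a6 \<and> a10 = a6 \<and> a1 = a6) then False else if (a9 = a7 \<and> a0 = a7 \<and> a2 = a7) then False else if (a10 = a8 \<and> a1 = a8 \<and> a3 = a8) then False else if (a0 = a9 \<and> a2 = a9 \<and> a4 = a9) then False else if (a1 = a10 \<and> a3 = a10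 \<and> a5 = a10) then False else if (a3 = a0 \<and> a6 = a0 \<and> a9 = a0) then False else if (a4 = a1 \<and> a7 = a1 \<and> a10 = a1) then False else if (a5 = a2 \<and> a8 = a2 \<and> a0 = a2) then False else if (a6 = a3 \<and> a9 = a3 \<and> a1 = a3) then False else if (a7 = a4 \<and> a10 = a4 \<and> a2 = a4) then False else if (a8 = a5 \<and> a0 = a5 \<and> a3 = a5) then False else if (a9 = a6 \<and> a1 = a6 \<and> a4 = a6) then False else if (a10 = a7 \<and> a2 = a7 \<and> a5 = a7) then False else if (a0 = a8 \<and> a3 = a8 \<and> a6 = a8) then False else if (a1 = a9 \<and> a4 = a9 \<and> a7 = a9) then False else if (a2 = a10 \<and> a5 = a10 \<and> a8 = a10) then False else if (a4 = a0 \<and> a8 = a0 \<and> a1 = a0) then False else if (a5 = a1 \<and> a9 = a1 \<and> a2 = a1) then False else if (a6 = a2 \<and> a10 = a2 \<and> a3 = a2) then False else if (a7 = a3 \<and> a0 = a3 \<and> a4 = a3) then False else if (a8 = a4 \<and> a1 = a4 \<and> a5 = a4) then False else if (a9 = a5 \<and> a2 = a5 \<and> a6 = a5) then False else if (a10 = a6 \<and> a3 = a6 \<and> a7 = a6) then False else if (a0 = a7 \<and> a4 = a7 \<and> a8 = a7) then False else if (a1 = a8 \<and> a5 = a8 \<and> a9 = a8) then False else if (a2 = a9 \<and> a6 = a9 \<and> a10 = a9) then False else if (a3 = a10 \<and> a7 = a10 \<and> a0 = a10) then False else if (a5 = a0 \<and> a10 = a0 \<and> a4 = a0) then False else if (a6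 = a1 \<and> a0 = a1 \<and> a5 = a1) then False else if (a7 = a2 \<and> a1 = a2 \<and> a6 = a2) then False else if (a8 = a3 \<and> a2 = a3 \<and> a7 = a3) then False else if (a9 = a4 \<and> a3 = a4 \<and> a8 = a4) then False else if (a10 = a5 \<and> a4 = a5 \<and> a9 = a5) then False else if (a0 = a6 \<and> a5 = a6 \<and> a10 = a6) then False else if (a1 = a7 \<and> a6 = a7 \<and> a0 = a7) then False else if (a2 = a8 \<and> a7 = a8 \<and> a1 = a8) then False else if (a3 = a9 \<and> a8 = a9 \<and> a2 = a9) then False else if (a4 = a10 \<and> a9 = a10 \<and> a3 = a10) then False else if (a6 = a0 \<and> a1 = a0 \<and> a7 = a0) then False else if (a7 = a1 \<and> a2 = a1 \<and> a8 = a1) then False else if (a8 = a2 \<and> a3 = a2 \<and> a9 = a2) then False else if (a9 = a3 \<and> a4 = a3 \<and> a10 = a3) then False else if (a10 = a4 \<and> a5 = a4 \<and> a0 = a4) then False else if (a0 = a5 \<and> a6 = a5 \<and> a1 = a5) then False else if (a1 = a6 \<and> a7 = a6 \<and> a2 = a6) then False else if (a2 = a7 \<and> a8 = a7 \<and> a3 = a7) then False else if (a3 = a8 \<and> a9 = a8 \<and> a4 = a8) then False else if (a4 = a9 \<and> a10 = a9 \<and> a5 = a9) then False else if (a5 = a10 \<and> a0 = a10 \<and> a6 = a10) then False else if (a7 = a0 \<and> a3 = a0 \<and> a10 = a0) then False else if (a8 = a1 \<and> a4 = a1 \<and> a0 = a1) then False else if (a9 = a2 \<and> a5 = a2 \<and>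 a1 = a2) then False else if (a10 = a3 \<and> a6 = a3 \<and> a2 = a3) then False else if (a0 = a4 \<and> a7 = a4 \<and> a3 = a4) then False else if (a1 = a5 \<and> a8 = a5 \<and> a4 = a5) then False else if (a2 = a6 \<and> a9 = a6 \<and> a5 = a6) then False else if (a3 = a7 \<and> a10 = a7 \<and> a6 = a7) then False else if (a4 = a8 \<and> a0 = a8 \<and> a7 = a8) then False else if (a5 = a9 \<and> a1 = a9 \<and> a8 = a9) then False else if (a6 = a10 \<and> a2 = a10 \<and> a9 = a10) then False else if (a8 = a0 \<and> a5 = a0 \<and> a2 = a0) then False else if (a9 = a1 \<and> a6 = a1 \<and> a3 = a1) then False else if (a10 = a2 \<and> a7 = a2 \<and> a4 = a2) then False else if (a0 = a3 \<and> a8 = a3 \<and> a5 = a3) then False else if (a1 = a4 \<and> a9 = a4 \<and> a6 = a4) then False else if (a2 = a5 \<and> a10 = a5 \<and> a7 = a5) then False else if (a3 = a6 \<and> a0 = a6 \<and> a8 = a6) then False else if (a4 = a7 \<and> a1 = a7 \<and> a9 = a7) then False else if (a5 = a8 \<and> a2 = a8 \<and> a10 = a8) then False else if (a6 = a9 \<and> a3 = a9 \<and> a0 = a9) then False else if (a7 = a10 \<and> a4 = a10 \<and> a1 = a10) then False else if (a9 = a0 \<and> a7 = a0 \<and> a5 = a0) then False else if (a10 = a1 \<and> a8 = a1 \<and> a6 = a1) then False else if (a0 = a2 \<and> a9 = a2 \<and> a7 = a2) then False else if (a1 = a3 \<and> a10 = a3 \<and> a8 = a3) then False else if (a2 = a4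 \<and> a0 = a4 \<and> a9 = a4) then False else if (a3 = a5 \<and> a1 = a5 \<and> a10 = a5) then False else if (a4 = a6 \<and> a2 = a6 \<and> a0 = a6) then False else if (a5 = a7 \<and> a3 = a7 \<and> a1 = a7) then False else if (a6 = a8 \<and> a4 = a8 \<and> a2 = a8) then False else if (a7 = a9 \<and> a5 = a9 \<and> a3 = a9) then False else if (a8 = a10 \<and> a6 = a10 \<and> a4 = a10) then False else if (a10 = a0 \<and> a9 = a0 \<and> a8 = a0) then False else if (a0 = a1 \<and> a10 = a1 \<and> a9 = a1) then False else if (a1 = a2 \<and> a0 = a2 \<and> a10 = a2) then False else if (a2 = a3 \<and> a1 = a3 \<and> a0 = a3) then False else if (a3 = a4 \<and> a2 = a4 \<and> a1 = a4) then False else if (a4 = a5 \<and> a3 = a5 \<and> a2 = a5) then False else if (a5 = a6 \<and> a4 = a6 \<and> a3 = a6) then False else if (a6 = a7 \<and> a5 = a7 \<and> a4 = a7) then False else if (a7 = a8 \<and> a6 = a8 \<and> a5 = a8) then False else if (a8 = a9 \<and> a7 = a9 \<and> a6 = a9) then False else if (a9 = a10 \<and> a8 = a10 \<and> a7 = a10) then False else True)"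
  unfolding okp11_disj by (simp only: ifF de_Morgan_disj conj_True)

fun gen :: "(color list \<Rightarrow> bool) \<Rightarrow> nat \<Rightarrow> color list \<Rightarrow> color list list" where
  "gen P 0 acc = (if P acc then [acc] else [])"
| "gen P (Suc n) acc = gen P n (B#acc) @ gen P n (R#acc)"

lemma gen_num: "gen P (numeral n) acc = gen P (pred_numeral n) (B#acc) @ gen P (pred_numeral n) (R#acc)"
  by (simp add: numeral_eq_Suc)


lemma gen_set: "set (gen P n acc) = {v @ acc | v. length v = n \<and> P (v @ acc)}"
proof (induction n arbitrary: acc)
  case 0 then show ?case by auto
next
  case (Suc n)
  show ?case
  proof (intro set_eqI iffI)
    fix x assume "x \<in> set (gen P (Suc n) acc)"
    then obtain c v where "x = v @ c # acc" "length v = n" "P (v @ c # acc)"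
      using Suc by auto
    then show "x \<in> {v @ acc | v. length v = Suc n \<and> P (v @ acc)}"
      by (intro CollectI exI[of _ "v @ [c]"]) auto
  next
    fix x assume "x \<in> {v @ acc | v. length v = Suc n \<and> P (v @ acc)}"
    then obtain v where v: "x = v @ acc" "length v = Suc n" "P (v @ acc)" by auto
    then obtain v' c where v': "v = v' @ [c]" by (metis length_Suc_conv_rev)
    show "x \<in> set (gen P (Suc n) acc)"
      using v v' Suc by (cases c) auto
  qed
qed

lemma S_gen: "S p = set (gen (okp p) p [])"
proof -
  have "{1..p-1} = set [1..<p]" by auto
  moreover have "\<And>Q. (\<exists>i<p. Q i) = (\<exists>i\<in>set [0..<p]. Q i)" by auto
  ultimately show ?thesis
    unfolding S_def okp_def words_def gen_set by auto
qed

lemma rho_len[simp]: "length (rho p k w) = p" by (simp add: rho_def)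
lemma sigma_len[simp]: "length (sigma p k w) = p" by (simp add: sigma_def)
lemma tau_len[simp]: "length (tau w) = length w" by (simp add: tau_def)
lemma rho_nth: "i < p \<Longrightarrow> rho p k w ! i = w ! ((i + p - k mod p) mod p)" by (simp add: rho_def)
lemma sigma_nth: "i < p \<Longrightarrow> sigma p k w ! i = w ! ((k mod p + p - i) mod p)" by (simp add: sigma_def)
lemma tau_nth: "i < length w \<Longrightarrow> tau w ! i = swap (w ! i)" by (simp add: tau_def)
lemma tau_tau[simp]: "tau (tau w) = w"
  by (simp add: tau_def swap_def map_idI split: color.splits)

definition PP :: "nat \<Rightarrow> bool" where "PP p = (p = 5 \<or> p = 11)"

lemma PP_pos: "PP p \<Longrightarrow> 0 < p" by (auto simp: PP_def)

lemma rho_0: "length w = p \<Longrightarrow> PP p \<Longrightarrow> rho p 0 w = w"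
  by (rule nth_equalityI) (auto simp: rho_nth PP_def)

lemma idx: assumes "b \<le> a + p" "0 < p" shows "(a + p - b) mod p = nat ((int a - int b) mod int p)"
proof -
  have "int ((a + p - b) mod p) = (int a + int p - int b) mod int p"
    using assms by (simp add: of_nat_mod of_nat_diff)
  also have "int a + int p - int b = (int a - int b) + int p" by simp
  also have "((int a - int b) + int p) mod int p = (int a - int b) mod int p" by (rule mod_add_self2)
  finally show ?thesis by simp
qed

lemma idx_rho: "0 < p \<Longrightarrow> (i + p - k mod p) mod p = nat ((int i - int k) mod int p)"
proof -
  assume p: "0 < p"
  have "k mod p \<le> i + p" using p by (meson le_add2 le_trans less_imp_le mod_less_divisor)
  then have "(i + p - k mod p) mod p = nat ((int i - int (k mod p)) mod int p)" using idx p by blast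
  then show ?thesis by (simp add: of_nat_mod mod_simps)
qed

lemma idx_sigma: "0 < p \<Longrightarrow> i < p \<Longrightarrow> (k mod p + p - i) mod p = nat ((int k - int i) mod int p)"
proof -
  assume p: "0 < p" "i < p"
  then have "(k mod p + p - i) mod p = nat ((int (k mod p) - int i) mod int p)" using idx by simp
  then show ?thesis by (simp add: of_nat_mod mod_simps)
qed

lemma nat_mod_lt: "0 < p \<Longrightarrow> nat (x mod int p) < p"
  by (simp add: nat_less_iff)

lemma int_nat_mod: "0 < p \<Longrightarrow> int (nat (x mod int p)) = x mod int p"
  by simp

lemma rho_nth': "0 < p \<Longrightarrow> i < p \<Longrightarrow> rho p k w ! i = w ! nat ((int i - int k) mod int p)"
  by (simp add: rho_nth idx_rho)

lemma sigma_nth': "0 < p \<Longrightarrow> i < p \<Longrightarrow> sigma p k w ! i = w ! nat ((int k - int i) mod int p)"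
  by (simp add: sigma_nth idx_sigma)

lemma rho_rho: assumes "PP p" "length w = p"
  shows "rho p k (rho p j w) = rho p ((k + j) mod p) w"
proof (rule nth_equalityI)
  fix i assume "i < length (rho p k (rho p j w))"
  then have i: "i < p" by simp
  have p: "0 < p" using PP_pos[OF assms(1)] .
  show "rho p k (rho p j w) ! i = rho p ((k + j) mod p) w ! i"
    using i p by (simp add: rho_nth' nat_mod_lt int_nat_mod of_nat_mod mod_simps algebra_simps)
qed simp

lemma rho_sigma: assumes "PP p" "length w = p"
  shows "rho p k (sigma p j w) = sigma p ((k + j) mod p) w"
proof (rule nth_equalityI)
  fix i assume "i < length (rho p k (sigma p j w))"
  then have i: "i < p" by simp
  have p: "0 < p" using PP_pos[OF assms(1)] .
  show "rho p k (sigma p j w) ! i = sigma p ((k + j) mod p) w ! i"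
    using i p by (simp add: rho_nth' sigma_nth' nat_mod_lt int_nat_mod of_nat_mod mod_simps algebra_simps)
qed simp

lemma sigma_rho: assumes "PP p" "length w = p"
  shows "sigma p k (rho p j w) = sigma p ((k + p - j mod p) mod p) w"
proof (rule nth_equalityI)
  fix i assume "i < length (sigma p k (rho p j w))"
  then have i: "i < p" by simp
  have p: "0 < p" using PP_pos[OF assms(1)] .
  show "sigma p k (rho p j w) ! i = sigma p ((k + p - j mod p) mod p) w ! i"
    using i p by (simp add: rho_nth' sigma_nth' nat_mod_lt int_nat_mod of_nat_mod mod_simps algebra_simps idx_rho)
qed simp

lemma sigma_sigma: assumes "PP p" "length w = p"
  shows "sigma p k (sigma p j w) = rho p ((k + p - j mod p) mod p) w"
proof (rule nth_equalityI)
  fix i assume "i < length (sigma p k (sigma p j w))"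
  then have i: "i < p" by simp
  have p: "0 < p" using PP_pos[OF assms(1)] .
  show "sigma p k (sigma p j w) ! i = rho p ((k + p - j mod p) mod p) w ! i"
    using i p by (simp add: rho_nth' sigma_nth' nat_mod_lt int_nat_mod of_nat_mod mod_simps algebra_simps idx_rho)
qed simp

lemma rho_tau: "length w = p \<Longrightarrow> PP p \<Longrightarrow> rho p k (tau w) = tau (rho p k w)"
  by (rule nth_equalityI) (auto simp: rho_nth tau_nth PP_def)

lemma sigma_tau: "length w = p \<Longrightarrow> PP p \<Longrightarrow> sigma p k (tau w) = tau (sigma p k w)"
  by (rule nth_equalityI) (auto simp: sigma_nth tau_nth PP_def)

lemma orbit_eq_gen:
  assumes comp: "\<And>g h. g \<in> G \<Longrightarrow> h \<in> G \<Longrightarrow> \<exists>k\<in>G. \<forall>x\<in>A. g (h x) = k x"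
    and inv: "\<And>g. g \<in> G \<Longrightarrow> \<exists>h\<in>G. \<forall>x\<in>A. h (g x) = x"
    and maps: "\<And>g x. g \<in> G \<Longrightarrow> x \<in> A \<Longrightarrow> g x \<in> A"
    and x: "x \<in> A" and v: "v \<in> orbit G x"
  shows "orbit G v = orbit G x"
proof -
  obtain g where g: "g \<in> G" "v = g x" using v unfolding orbit_def by auto
  have vA: "v \<in> A" using maps g x by auto
  show ?thesis
  proof (intro set_eqI iffI)
    fix y assume "y \<in> orbit G v"
    then obtain h where h: "h \<in> G" "y = h v" unfolding orbit_def by auto
    obtain k where "k \<in> G" "\<forall>x\<in>A. h (g x) = k x" using comp[OF h(1) g(1)] by auto
    then show "y \<in> orbit G x" using h g x unfolding orbit_def by auto
  next
    fix y assume "y \<in> orbit G x"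
    then obtain k where k: "k \<in> G" "y = k x" unfolding orbit_def by auto
    obtain g' where g': "g' \<in> G" "\<forall>x\<in>A. g' (g x) = x" using inv[OF g(1)] by auto
    obtain m where m: "m \<in> G" "\<forall>x\<in>A. k (g' x) = m x" using comp[OF k(1) g'(1)] by auto
    have "y = k (g' v)" using g g' k x by auto
    also have "\<dots> = m v" using m vA by auto
    finally show "y \<in> orbit G v" using m unfolding orbit_def by auto
  qed
qed

lemma rho_in: "m < p \<Longrightarrow> rho p m \<in> Dih p" unfolding Dih_def by auto
lemma sigma_in: "m < p \<Longrightarrow> sigma p m \<in> Dih p" unfolding Dih_def by auto

lemma Dih_comp: assumes "PP p" "g \<in> Dih p" "h \<in> Dih p"
  shows "\<exists>k\<in>Dih p. \<forall>x\<in>{w. length w = p}. g (h x) = k x"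
proof -
  have p0: "0 < p" using PP_pos[OF assms(1)] .
  from assms(2) consider (r) k where "k < p" "g = rho p k" | (s) k where "k < p" "g = sigma p k"
    unfolding Dih_def by auto
  then show ?thesis
  proof cases
    case r
    from assms(3) consider (r2) j where "j < p" "h = rho p j" | (s2) j where "j < p" "h = sigma p j"
      unfolding Dih_def by auto
    then show ?thesis
    proof cases
      case r2 then show ?thesis using r p0 assms(1)
        by (intro bexI[where x="rho p ((k + j) mod p)"]) (auto simp: rho_rho intro: rho_in)
    next
      case s2 then show ?thesis using r p0 assms(1)
        by (intro bexI[where x="sigma p ((k + j) mod p)"]) (auto simp: rho_sigma intro: sigma_in)
    qed
  next
    case s
    from assms(3) consider (r2) j where "j < p" "h = rho p j" | (s2) j where "j < p" "h = sigma p j"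
      unfolding Dih_def by auto
    then show ?thesis
    proof cases
      case r2 then show ?thesis using s p0 assms(1)
        by (intro bexI[where x="sigma p ((k + p - j mod p) mod p)"]) (auto simp: sigma_rho intro: sigma_in)
    next
      case s2 then show ?thesis using s p0 assms(1)
        by (intro bexI[where x="rho p ((k + p - j mod p) mod p)"]) (auto simp: sigma_sigma intro: rho_in)
    qed
  qed
qed

lemma Dih_inv: assumes "PP p" "g \<in> Dih p"
  shows "\<exists>h\<in>Dih p. \<forall>x\<in>{w. length w = p}. h (g x) = x"
proof -
  have p0: "0 < p" using PP_pos[OF assms(1)] .
  from assms(2) consider k where "k < p" "g = rho p k" | k where "k < p" "g = sigma p k"
    unfolding Dih_def by auto
  then show ?thesis
  proof cases
    case 1
    have e: "((p - k) mod p + k) mod p = 0" using 1 by (simp add: mod_add_left_eq)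
    have "\<forall>x\<in>{w. length w = p}. rho p ((p - k) mod p) (g x) = x"
      using 1 assms(1) p0 e by (auto simp: rho_rho rho_0)
    moreover have "rho p ((p - k) mod p) \<in> Dih p" using p0 by (intro rho_in) simp
    ultimately show ?thesis by blast
  next
    case 2
    have "\<forall>x\<in>{w. length w = p}. sigma p k (g x) = x"
      using 2 assms(1) p0 by (auto simp: sigma_sigma rho_0)
    moreover have "sigma p k \<in> Dih p" using 2 by (intro sigma_in)
    ultimately show ?thesis by blast
  qed
qed

lemma Dih_maps: "g \<in> Dih p \<Longrightarrow> length (g x) = p"
  unfolding Dih_def by auto

lemma Dih_tau: "PP p \<Longrightarrow> g \<in> Dih p \<Longrightarrow> length x = p \<Longrightarrow> g (tau x) = tau (g x)"
  unfolding Dih_def by (auto simp: rho_tau sigma_tau)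

lemma DihTau_cases: "g \<in> DihTau p \<Longrightarrow> (g \<in> Dih p \<Longrightarrow> P) \<Longrightarrow> (\<And>g'. g' \<in> Dih p \<Longrightarrow> g = tau \<circ> g' \<Longrightarrow> P) \<Longrightarrow> P"
  unfolding DihTau_def by auto

lemma DihTau_I1: "g \<in> Dih p \<Longrightarrow> g \<in> DihTau p" unfolding DihTau_def by auto
lemma DihTau_I2: "g \<in> Dih p \<Longrightarrow> tau \<circ> g \<in> DihTau p" unfolding DihTau_def by auto

lemma DihTau_comp: assumes "PP p" "g \<in> DihTau p" "h \<in> DihTau p"
  shows "\<exists>k\<in>DihTau p. \<forall>x\<in>{w. length w = p}. g (h x) = k x"
proof -
  note L = Dih_comp[OF assms(1)]
  show ?thesis
  proof (rule DihTau_cases[OF assms(2)]; rule DihTau_cases[OF assms(3)])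
    assume a: "g \<in> Dih p" "h \<in> Dih p"
    then show ?thesis using L[OF a] DihTau_I1 by blast
  next
    fix h' assume a: "g \<in> Dih p" "h' \<in> Dih p" "h = tau \<circ> h'"
    obtain k where k: "k \<in> Dih p" "\<forall>x\<in>{w. length w = p}. g (h' x) = k x" using L[OF a(1,2)] by blast
    have "\<forall>x\<in>{w. length w = p}. g (h x) = (tau \<circ> k) x"
      using k a assms(1) Dih_tau Dih_maps by auto
    then show ?thesis using DihTau_I2[OF k(1)] by blast
  next
    fix g' assume a: "h \<in> Dih p" "g' \<in> Dih p" "g = tau \<circ> g'"
    obtain k where k: "k \<in> Dih p" "\<forall>x\<in>{w. length w = p}. g' (h x) = k x" using L[OF a(2,1)] by blast
    have "\<forall>x\<in>{w. length w = p}. g (h x) = (tau \<circ> k) x"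
      using k a by auto
    then show ?thesis using DihTau_I2[OF k(1)] by blast
  next
    fix g' h' assume a: "h' \<in> Dih p" "h = tau \<circ> h'" "g' \<in> Dih p" "g = tau \<circ> g'"
    obtain k where k: "k \<in> Dih p" "\<forall>x\<in>{w. length w = p}. g' (h' x) = k x" using L[OF a(3,1)] by blast
    have "\<forall>x\<in>{w. length w = p}. g (h x) = k x"
      using k a assms(1) Dih_tau Dih_maps by auto
    then show ?thesis using DihTau_I1[OF k(1)] by blast
  qed
qed

lemma DihTau_inv: assumes "PP p" "g \<in> DihTau p"
  shows "\<exists>h\<in>DihTau p. \<forall>x\<in>{w. length w = p}. h (g x) = x"
proof (rule DihTau_cases[OF assms(2)])
  assume "g \<in> Dih p"
  then show ?thesis using Dih_inv[OF assms(1)] DihTau_I1 by blast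
next
  fix g' assume a: "g' \<in> Dih p" "g = tau \<circ> g'"
  obtain h where h: "h \<in> Dih p" "\<forall>x\<in>{w. length w = p}. h (g' x) = x" using Dih_inv[OF assms(1) a(1)] by blast
  have "\<forall>x\<in>{w. length w = p}. (tau \<circ> h) (g x) = x"
    using h a assms(1) Dih_tau Dih_maps by auto
  then show ?thesis using DihTau_I2[OF h(1)] by blast
qed

lemma DihTau_maps: "g \<in> DihTau p \<Longrightarrow> length x = p \<Longrightarrow> length (g x) = p"
  unfolding DihTau_def using Dih_maps by auto

lemma Dih_orbit_eq: assumes "PP p" "length x = p" "v \<in> orbit (Dih p) x" shows "orbit (Dih p) v = orbit (Dih p) x"
  apply (rule orbit_eq_gen[of "Dih p" "{w. length w = p}"])
  using Dih_comp[OF assms(1)] apply blast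
  using Dih_inv[OF assms(1)] apply blast
  using Dih_maps apply blast
  using assms by auto

lemma DihTau_orbit_eq: assumes "PP p" "length x = p" "v \<in> orbit (DihTau p) x" shows "orbit (DihTau p) v = orbit (DihTau p) x"
  apply (rule orbit_eq_gen[of "DihTau p" "{w. length w = p}"])
  using DihTau_comp[OF assms(1)] apply blast
  using DihTau_inv[OF assms(1)] apply blast
  using DihTau_maps apply blast
  using assms by auto

lemma card_orbits:
  assumes cover: "\<forall>w\<in>set L. \<exists>r\<in>set Rs. w \<in> orbit G r"
    and sub: "set Rs \<subseteq> set L"
    and sep: "\<forall>r1\<in>set Rs. \<forall>r2\<in>set Rs. r1 \<noteq> r2 \<longrightarrow> r2 \<notin> orbit G r1"
    and refl: "\<forall>r\<in>set Rs. r \<in> orbit G r"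
    and dist: "distinct Rs"
    and oeq: "\<And>x v. x \<in> set L \<Longrightarrow> v \<in> orbit G x \<Longrightarrow> orbit G v = orbit G x"
  shows "card (orbits G (set L)) = length Rs"
proof -
  have "orbit G ` set L = orbit G ` set Rs"
  proof (intro set_eqI iffI)
    fix Z assume "Z \<in> orbit G ` set L"
    then obtain w where w: "w \<in> set L" "Z = orbit G w" by auto
    obtain r where r: "r \<in> set Rs" "w \<in> orbit G r" using cover w by auto
    have "orbit G w = orbit G r" using oeq r sub by auto
    then show "Z \<in> orbit G ` set Rs" using w r by auto
  next
    fix Z assume "Z \<in> orbit G ` set Rs" then show "Z \<in> orbit G ` set L" using sub by auto
  qed
  moreover have "inj_on (orbit G) (set Rs)"
  proof (rule inj_onI)
    fix r1 r2 assume a: "r1 \<in> set Rs" "r2 \<in> set Rs" "orbit G r1 = orbit G r2"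
    show "r1 = r2"
    proof (rule ccontr)
      assume "r1 \<noteq> r2"
      then have "r2 \<notin> orbit G r1" using sep a by auto
      then show False using refl a by auto
    qed
  qed
  ultimately have "card (orbit G ` set L) = card (set Rs)"
    by (simp add: card_image)
  then show ?thesis unfolding orbits_def using distinct_card[OF dist] by simp
qed

lemma genL5: "gen (okp 5) 5 [] = [[R, R, B, B, B], [R, B, R, B, B], [B, R, R, B, B], [R, R, R, B, B], [R, B, B, R, B], [B, R, B, R, B], [R, R, B, R, B], [B, B, R, R, B], [R, B, R, R, B], [B, R, R, R, B], [R, B, B, B, R], [B, R, B, B, R], [R, R, B, B, R], [B, B, R, B, R], [R, B, R, B, R], [B, R, R, B, R], [B, B, B, R, R], [R, B, B, R, R], [B, R, B, R, R], [B, B, R, R, R]]"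
  by (simp add: okp5 gen_num)

lemma oL5_0: "orbL 5 [R, R, B, B, B] = [[R, R, B, B, B], [B, R, R, B, B], [B, B, R, R, B], [B, B, B, R, R], [R, B, B, B, R], [R, B, B, B, R], [R, R, B, B, B], [B, R, R, B, B], [B, B, R, R, B], [B, B, B, R, R]]"
  by (simp add: orbL_def rho_def sigma_def upt_rec)

lemma orb5D0: "orbit (Dih 5) [R, R, B, B, B] = set [[R, R, B, B, B], [B, R, R, B, B], [B, B, R, R, B], [B, B, B, R, R], [R, B, B, B, R], [R, B, B, B, R], [R, R, B, B, B], [B, R, R, B, B], [B, B, R, R, B], [B, B, B, R, R]]"
  unfolding orbit_Dih oL5_0 by (rule refl)

lemma oL5_1: "orbL 5 [R, B, R, B, B] = [[R, B, R, B, B], [B, R, B, R, B], [B, B, R, B, R], [R, B, B, R, B], [B, R, B, B, R], [R, B, B, R, B], [B, R, B, B, R], [R, B, R, B, B], [B, R, B, R, B], [B, B, R, B, R]]"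
  by (simp add: orbL_def rho_def sigma_def upt_rec)

lemma orb5D1: "orbit (Dih 5) [R, B, R, B, B] = set [[R, B, R, B, B], [B, R, B, R, B], [B, B, R, B, R], [R, B, B, R, B], [B, R, B, B, R], [R, B, B, R, B], [B, R, B, B, R], [R, B, R, B, B], [B, R, B, R, B], [B, B, R, B, R]]"
  unfolding orbit_Dih oL5_1 by (rule refl)

lemma oL5_2: "orbL 5 [R, R, R, B, B] = [[R, R, R, B, B], [B, R, R, R, B], [B, B, R, R, R], [R, B, B, R, R], [R, R, B, B, R], [R, B, B, R, R], [R, R, B, B, R], [R, R, R, B, B], [B, R, R, R, B], [B, B, R, R, R]]"
  by (simp add: orbL_def rho_def sigma_def upt_rec)

lemma orb5D2: "orbit (Dih 5) [R, R, R, B, B] = set [[R, R, R, B, B], [B, R, R, R, B], [B, B, R, R, R], [R, B, B, R, R], [R, R, B, B, R], [R, B, B, R, R], [R, R, B, B, R], [R, R, R, B, B], [B, R, R, R, B], [B, B, R, R, R]]"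
  unfolding orbit_Dih oL5_2 by (rule refl)

lemma oL5_3: "orbL 5 [R, R, B, R, B] = [[R, R, B, R, B], [B, R, R, B, R], [R, B, R, R, B], [B, R, B, R, R], [R, B, R, B, R], [R, B, R, B, R], [R, R, B, R, B], [B, R, R, B, R], [R, B, R, R, B], [B, R, B, R, R]]"
  by (simp add: orbL_def rho_def sigma_def upt_rec)

lemma orb5D3: "orbit (Dih 5) [R, R, B, R, B] = set [[R, R, B, R, B], [B, R, R, B, R], [R, B, R, R, B], [B, R, B, R, R], [R, B, R, B, R], [R, B, R, B, R], [R, R, B, R, B], [B, R, R, B, R], [R, B, R, R, B], [B, R, B, R, R]]"
  unfolding orbit_Dih oL5_3 by (rule refl)

definition R5D where "R5D = [[R, R, B, B, B], [R, B, R, B, B], [R, R, R, B, B], [R, R, B, R, B]]"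

lemmas orbs5D = orb5D0 orb5D1 orb5D2 orb5D3

lemma orb5T0: "orbit (DihTau 5) [R, R, B, B, B] = set [[R, R, B, B, B], [B, R, R, B, B], [B, B, R, R, B], [B, B, B, R, R], [R, B, B, B, R], [R, B, B, B, R], [R, R, B, B, B], [B, R, R, B, B], [B, B, R, R, B], [B, B, B, R, R], [B, B, R, R, R], [R, B, B, R, R], [R, R, B, B, R], [R, R, R, B, B], [B, R, R, R, B], [B, R, R, R, B], [B, B, R, R, R], [R, B, B, R, R], [R, R, B, B, R], [R, R, R, B, B]]"
  unfolding orbit_DihTau oL5_0 by (simp add: tau_def swap_def)

lemma orb5T1: "orbit (DihTau 5) [R, B, R, B, B] = set [[R, B, R, B, B], [B, R, B, R, B], [B, B, R, B, R], [R, B, B, R, B], [B, R, B, B, R], [R, B, B, R, B], [B, R, B, B, R], [R, B, R, B, B], [B, R, B, R, B], [B, B, R, B, R], [B, R, B, R, R], [R, B, R, B, R], [R, R, B, R, B], [B, R, R, B, R], [R, B, R, R, B], [B, R, R, B, R], [R, B, R, R, B], [B, R, B, R, R], [R, B, R, B, R], [R, R, B, R, B]]"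
  unfolding orbit_DihTau oL5_1 by (simp add: tau_def swap_def)

definition R5T where "R5T = [[R, R, B, B, B], [R, B, R, B, B]]"

lemmas orbs5T = orb5T0 orb5T1

lemma genL11: "gen (okp 11) 11 [] = [[R, R, R, B, R, B, B, R, B, B, B], [R, R, R, B, R, R, B, R, B, B, B], [R, B, B, R, B, R, R, R, B, B, B], [R, B, R, R, B, R, R, R, B, B, B], [R, B, R, R, R, B, B, B, R, B, B], [B, R, R, R, B, R, B, B, R, B, B], [B, R, R, R, B, R, R, B, R, B, B], [R, B, B, B, R, R, R, B, R, B, B], [B, R, B, B, R, B, R, R, R, B, B], [B, R, B, R, R, B, R, R, R, B, B], [B, R, B, R, R, R, B, B, B, R, B], [R, R, B, R, R, R, B, B, B, R, B], [R, R, R, B, B, B, R, B, B, R, B], [B, B, R, R, R, B, R, B, B, R, B], [B, B, R, R, R, B, R, R, B, R, B], [B, R, B, B, B, R, R, R, B, R, B], [R, R, R, B, B, B, R, B, R, R, B], [R, B, B, B, R, R, R, B, R, R, B], [R, B, B, R, B, B, B, R, R, R, B], [R, R, B, R, B, B, B, R, R, R, B], [B, B, R, B, B, R, B, R, R, R, B], [B, B, R, B, R, R, B, R, R, R, B], [R, R, B, R, B, B, R, B, B, B, R], [R, R, B, R, R, B, R, B, B, B, R], [B, B, R, B, R, R, R, B, B, B, R], [B, R, R, B, R, R, R, B, B, B, R], [B, R, R, R, B, B, B, R, B, B, R], [B, B, B, R, R, R, B, R, B, B, R], [R, B, R, R, R, B, B, B, R, B, R], [R, R, B, B, B, R, B,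 B, R, B, R], [R, R, B, B, B, R, B, R, R, B, R], [B, B, B, R, R, R, B, R, R, B, R], [B, B, R, B, B, B, R, R, R, B, R], [R, B, R, B, B, B, R, R, R, B, R], [R, B, R, B, B, R, B, B, B, R, R], [R, B, R, R, B, R, B, B, B, R, R], [B, R, R, R, B, B, B, R, B, R, R], [R, B, B, B, R, B, B, R, B, R, R], [R, B, B, B, R, B, R, R, B, R, R], [B, R, B, B, B, R, R, R, B, R, R], [B, R, B, B, R, B, B, B, R, R, R], [B, R, R, B, R, B, B, B, R, R, R], [B, B, B, R, B, B, R, B, R, R, R], [B, B, B, R, B, R, R, B, R, R, R]]"
  by (simp add: okp11 gen_num)

lemma oL11_0: "orbL 11 [R, R, R, B, R, B, B, R, B, B, B] = [[R, R, R, B, R, B, B, R, B, B, B], [B, R, R, R, B, R, B, B, R, B, B], [B, B, R, R, R, B, R, B, B, R, B], [B, B, B, R, R, R, B, R, B, B, R], [R, B, B, B, R, R, R, B, R, B, B], [B, R, B, B, B, R, R, R, B, R, B], [B, B, R, B, B, B, R, R, R, B, R], [R, B, B, R, B, B, B, R, R, R, B], [B, R, B, B, R, B, B, B, R, R, R], [R, B, R, B, B, R, B, B, B, R, R], [R, R, B, R, B, B, R, B, B, B, R], [R, B, B, B, R, B, B, R, B, R, R], [R, R, B, B, B, R, B, B, R, B, R], [R, R, R, B, B, B, R, B, B, R, B], [B, R, R, R, B, B, B, R, B, B, R], [R, B, R, R, R, B, B, B, R, B, B], [B, R, B, R, R, R, B, B, B, R, B], [B, B, R, B, R, R, R, B,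 B, B, R], [R, B, B, R, B, R, R, R, B, B, B], [B, R, B, B, R, B, R, R, R, B, B], [B, B, R, B, B, R, B, R, R, R, B], [B, B, B, R, B, B, R, B, R, R, R]]"
  by (simp add: orbL_def rho_def sigma_def upt_rec)

lemma orb11D0: "orbit (Dih 11) [R, R, R, B, R, B, B, R, B, B, B] = set [[R, R, R, B, R, B, B, R, B, B, B], [B, R, R, R, B, R, B, B, R, B, B], [B, B, R, R, R, B, R, B, B, R, B], [B, B, B, R, R, R, B, R, B, B, R], [R, B, B, B, R, R, R, B, R, B, B], [B, R, B, B, B, R, R, R, B, R, B], [B, B, R, B, B, B, R, R, R, B, R], [R, B, B, R, B, B, B, R, R, R, B], [B, R, B, B, R, B, B, B, R, R, R], [R, B, R, B, B, R, B, B, B, R, R], [R, R, B, R, B, B, R, B, B, B, R], [R, B, B, B, R, B, B, R, B, R, R], [R, R, B, B, B, R, B, B, R, B, R], [R, R, R, B, B, B, R, B, B, R, B], [B, R, R, R, B, B, B, R, B, B, R], [R, B, R, R, R, B, B, B, R, B, B], [B, R, B, R, R, R, B, B, B, R, B], [B, B, R, B, R, R, R, B, B, B, R], [R, B, B, R, B, R, R, R, B, B, B], [B, R, B, B, R, B, R, R, R, B, B], [B, B, R, B, B, R, B, R, R, R, B], [B, B, B, R, B, B, R, B, R, R, R]]"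
  unfolding orbit_Dih oL11_0 by (rule refl)

lemma oL11_1: "orbL 11 [R, R, R, B, R, R, B, R, B, B, B] = [[R, R, R, B, R, R, B, R, B, B, B], [B, R, R, R, B, R, R, B, R, B, B], [B, B, R, R, R, B, R, R, B, R, B], [B, B, B, R, R, R, B, R, R, B, R], [R, B, B, B, R, R, R, B, R, R, B], [B, R, B, B, B, R, R, R, B, R, R], [R, B, R, B, B, B, R, R, R, B, R], [R, R, B, R, B, B, B, R, R, R, B], [B, R, R, B, R, B, B, B, R, R, R], [R, B, R, R, B, R, B, B, B, R, R], [R, R, B, R, R, B, R, B, B, B, R], [R, B, B, B, R, B, R, R, B, R, R], [R, R, B, B, B, R, B, R, R, B, R], [R, R, R, B, B, B, R, B, R, R, B], [B, R, R, R, B, B, B, R, B, R, R], [R, B, R, R, R, B, B, B, R, B, R], [R, R, B, R, R, R, B, B, B, R, B], [B, R, R, B, R, R, R, B, B, B, R], [R, B, R, R, B, R, R, R, B, B, B], [B, R, B, R, R, B, R, R, R, B, B], [B, B, R, B, R, R, B, R, R, R, B], [B, B, B, R, B, R, R, B, R, R, R]]"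
  by (simp add: orbL_def rho_def sigma_def upt_rec)

lemma orb11D1: "orbit (Dih 11) [R, R, R, B, R, R, B, R, B, B, B] = set [[R, R, R, B, R, R, B, R, B, B, B], [B, R, R, R, B, R, R, B, R, B, B], [B, B, R, R, R, B, R, R, B, R, B], [B, B, B, R, R, R, B, R, R, B, R], [R, B, B, B, R, R, R, B, R, R, B], [B, R, B, B, B, R, R, R, B, R, R], [R, B, R, B, B, B, R, R, R, B, R], [R, R, B, R, B, B, B, R, R, R, B], [B, R, R, B, R, B, B, B, R, R, R], [R, B, R, R, B, R, B, B, B, R, R], [R, R, B, R, R, B, R, B, B, B, R], [R, B, B, B, R, B, R, R, B, R, R], [R, R, B, B, B, R, B, R, R, B, R], [R, R, R, B, B, B, R, B, R, R, B], [B, R, R, R, B, B, B, R, B, R, R], [R, B, R, R, R, B, B, B, R, B, R], [R, R, B, R, R, R, B, B, B, R, B], [B, R, R, B, R, R, R, B, B, B, R], [R, B, R, R, B, R, R, R, B, B, B], [B, R, B, R, R, B, R, R, R, B, B], [B, B, R, B, R, R, B, R, R, R, B], [B, B, B, R, B, R, R, B, R, R, R]]"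
  unfolding orbit_Dih oL11_1 by (rule refl)

definition R11D where "R11D = [[R, R, R, B, R, B, B, R, B, B, B], [R, R, R, B, R, R, B, R, B, B, B]]"

lemmas orbs11D = orb11D0 orb11D1

lemma orb11T0: "orbit (DihTau 11) [R, R, R, B, R, B, B, R, B, B, B] = set [[R, R, R, B, R, B, B, R, B, B, B], [B, R, R, R, B, R, B, B, R, B, B], [B, B, R, R, R, B, R, B, B, R, B], [B, B, B, R, R, R, B, R, B, B, R], [R, B, B, B, R, R, R, B, R, B, B], [B, R, B, B, B, R, R, R, B, R, B], [B, B, R, B, B, B, R, R, R, B, R], [R, B, B, R, B, B, B, R, R, R, B], [B, R, B, B, R, B, B, B, R, R, R], [R, B, R, B, B, R, B, B, B, R, R], [R, R, B, R, B, B, R, B, B, B, R], [R, B, B, B, R, B, B, R, B, R, R], [R, R, B, B, B, R, B, B, R, B, R], [R, R, R, B, B, B, R, B, B, R, B], [B, R, R, R, B, B, B, R, B, B, R], [R, B, R, R, R, B, B, B, R, B, B], [B, R, B, R, R, R, B, B, B, R, B], [B, B, R, B, R, R, R, B, B, B, R], [R, B, B, R, B, R, R, R, B, B, B], [B, R, B, B, R, B, R, R, R, B, B], [B, B, R, B, B, R, B, R, R, R, B], [B, B, B, R, B, B, R, B, R, R, R], [B, B, B, R, B, R, R, B, R, R, R], [R, B, B, B, R, B, R, R, B, R, R], [R, R, B, B, B, R, B, R, R, B, R], [R, R, R, B, B, B, R, B, R, R, B], [B, R, R, R, B, B, B, R, B, R, R], [R, B, R, R, R, B, B, B, R, B, R],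 [R, R, B, R, R, R, B, B, B, R, B], [B, R, R, B, R, R, R, B, B, B, R], [R, B, R, R, B, R, R, R, B, B, B], [B, R, B, R, R, B, R, R, R, B, B], [B, B, R, B, R, R, B, R, R, R, B], [B, R, R, R, B, R, R, B, R, B, B], [B, B, R, R, R, B, R, R, B, R, B], [B, B, B, R, R, R, B, R, R, B, R], [R, B, B, B, R, R, R, B, R, R, B], [B, R, B, B, B, R, R, R, B, R, R], [R, B, R, B, B, B, R, R, R, B, R], [R, R, B, R, B, B, B, R, R, R, B], [B, R, R, B, R, B, B, B, R, R, R], [R, B, R, R, B, R, B, B, B, R, R], [R, R, B, R, R, B, R, B, B, B, R], [R, R, R, B, R, R, B, R, B, B, B]]"
  unfolding orbit_DihTau oL11_0 by (simp add: tau_def swap_def)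

definition R11T where "R11T = [[R, R, R, B, R, B, B, R, B, B, B]]"

lemmas orbs11T = orb11T0

lemma mem_len: "x \<in> set L \<Longrightarrow> list_all (\<lambda>w. length w = p) L \<Longrightarrow> length x = p"
  by (simp add: list_all_iff)

theorem mainTheorem11:
  shows "card (S 5) = 20 \<and> card (orbits (Dih 5) (S 5)) = 4 \<and>
         card (orbits (DihTau 5) (S 5)) = 2 \<and>
         card (S 11) = 44 \<and> card (orbits (Dih 11) (S 11)) = 2 \<and>
         card (orbits (DihTau 11) (S 11)) = 1 \<and>
         [B,B,B,R,R] \<in> S 5 \<and> [B,B,B,R,B,B,R,B,R,R,R] \<in> S 11"
proof -
  have P5: "PP 5" and P11: "PP 11" by (simp_all add: PP_def)
  have len5: "list_all (\<lambda>w. length w = 5) (gen (okp 5) 5 [])" unfolding genL5 by simp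
  have len11: "list_all (\<lambda>w. length w = 11) (gen (okp 11) 11 [])" unfolding genL11 by simp
  have c1: "card (S 5) = 20" unfolding S_gen genL5 card_set by simp
  have c4: "card (S 11) = 44" unfolding S_gen genL11 card_set by simp
  have m: "[B,B,B,R,R] \<in> S 5 \<and> [B,B,B,R,B,B,R,B,R,R,R] \<in> S 11"
    unfolding S_gen genL5 genL11 by simp
  have "card (orbits (Dih 5) (set (gen (okp 5) 5 []))) = length R5D"
  proof (rule card_orbits)
    show "\<forall>w\<in>set (gen (okp 5) 5 []). \<exists>r\<in>set R5D. w \<in> orbit (Dih 5) r"
      unfolding genL5 R5D_def by (simp add: orbs5D)
    show "set R5D \<subseteq> set (gen (okp 5) 5 [])" unfolding genL5 R5D_def by simp
    show "\<forall>r1\<in>set R5D. \<forall>r2\<in>set R5D. r1 \<noteq> r2 \<longrightarrow> r2 \<notin> orbit (Dih 5) r1"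
      unfolding R5D_def by (simp add: orbs5D)
    show "\<forall>r\<in>set R5D. r \<in> orbit (Dih 5) r" unfolding R5D_def by (simp add: orbs5D)
    show "distinct R5D" unfolding R5D_def by simp
    show "\<And>x v. x \<in> set (gen (okp 5) 5 []) \<Longrightarrow> v \<in> orbit (Dih 5) x \<Longrightarrow> orbit (Dih 5) v = orbit (Dih 5) x"
      using Dih_orbit_eq[OF P5] mem_len[OF _ len5] by blast
  qed
  then have c5D: "card (orbits (Dih 5) (S 5)) = 4" unfolding S_gen R5D_def by simp
  have "card (orbits (DihTau 5) (set (gen (okp 5) 5 []))) = length R5T"
  proof (rule card_orbits)
    show "\<forall>w\<in>set (gen (okp 5) 5 []). \<exists>r\<in>set R5T. w \<in> orbit (DihTau 5) r"
      unfolding genL5 R5T_def by (simp add: orbs5T)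
    show "set R5T \<subseteq> set (gen (okp 5) 5 [])" unfolding genL5 R5T_def by simp
    show "\<forall>r1\<in>set R5T. \<forall>r2\<in>set R5T. r1 \<noteq> r2 \<longrightarrow> r2 \<notin> orbit (DihTau 5) r1"
      unfolding R5T_def by (simp add: orbs5T)
    show "\<forall>r\<in>set R5T. r \<in> orbit (DihTau 5) r" unfolding R5T_def by (simp add: orbs5T)
    show "distinct R5T" unfolding R5T_def by simp
    show "\<And>x v. x \<in> set (gen (okp 5) 5 []) \<Longrightarrow> v \<in> orbit (DihTau 5) x \<Longrightarrow> orbit (DihTau 5) v = orbit (DihTau 5) x"
      using DihTau_orbit_eq[OF P5] mem_len[OF _ len5] by blast
  qed
  then have c5T: "card (orbits (DihTau 5) (S 5)) = 2" unfolding S_gen R5T_def by simp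
  have "card (orbits (Dih 11) (set (gen (okp 11) 11 []))) = length R11D"
  proof (rule card_orbits)
    show "\<forall>w\<in>set (gen (okp 11) 11 []). \<exists>r\<in>set R11D. w \<in> orbit (Dih 11) r"
      unfolding genL11 R11D_def by (simp add: orbs11D)
    show "set R11D \<subseteq> set (gen (okp 11) 11 [])" unfolding genL11 R11D_def by simp
    show "\<forall>r1\<in>set R11D. \<forall>r2\<in>set R11D. r1 \<noteq> r2 \<longrightarrow> r2 \<notin> orbit (Dih 11) r1"
      unfolding R11D_def by (simp add: orbs11D)
    show "\<forall>r\<in>set R11D. r \<in> orbit (Dih 11) r" unfolding R11D_def by (simp add: orbs11D)
    show "distinct R11D" unfolding R11D_def by simp
    show "\<And>x v. x \<in> set (gen (okp 11) 11 []) \<Longrightarrow> v \<in> orbit (Dih 11) x \<Longrightarrow> orbit (Dih 11) v = orbit (Dih 11) x"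
      using Dih_orbit_eq[OF P11] mem_len[OF _ len11] by blast
  qed
  then have c11D: "card (orbits (Dih 11) (S 11)) = 2" unfolding S_gen R11D_def by simp
  have "card (orbits (DihTau 11) (set (gen (okp 11) 11 []))) = length R11T"
  proof (rule card_orbits)
    show "\<forall>w\<in>set (gen (okp 11) 11 []). \<exists>r\<in>set R11T. w \<in> orbit (DihTau 11) r"
      unfolding genL11 R11T_def by (simp add: orbs11T)
    show "set R11T \<subseteq> set (gen (okp 11) 11 [])" unfolding genL11 R11T_def by simp
    show "\<forall>r1\<in>set R11T. \<forall>r2\<in>set R11T. r1 \<noteq> r2 \<longrightarrow> r2 \<notin> orbit (DihTau 11) r1"
      unfolding R11T_def by (simp add: orbs11T)
    show "\<forall>r\<in>set R11T. r \<in> orbit (DihTau 11) r" unfolding R11T_def by (simp add: orbs11T)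
    show "distinct R11T" unfolding R11T_def by simp
    show "\<And>x v. x \<in> set (gen (okp 11) 11 []) \<Longrightarrow> v \<in> orbit (DihTau 11) x \<Longrightarrow> orbit (DihTau 11) v = orbit (DihTau 11) x"
      using DihTau_orbit_eq[OF P11] mem_len[OF _ len11] by blast
  qed
  then have c11T: "card (orbits (DihTau 11) (S 11)) = 1" unfolding S_gen R11T_def by simp
  show ?thesis using c1 c4 m c5D c5T c11D c11T by blast
qed

end
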